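(* Let $(X_n,\eta_n)$ be a time-homogeneous Markov chain on a locally finite set $\Sigma\subseteq\mathbb{R}_+\times S$ ($S$ finite), and suppose that for some $p>0$ there is $C_p<\infty$ with $\mathbb{E}_{x,i}[|X_{n+1}-X_n|^p]\le C_p$ for all $(x,i)\in\Sigma$. Let $r\in\mathbb{R}$, $\zeta\in(0,1)$, $E_n=\{|X_{n+1}-X_n|\le X_n^\zeta\}$, and let $g:S\to\mathbb{R}$. Then, as $x\to\infty$, \[\mathbb{E}_{x,i}[(g(\eta_{n+1})X_{n+1}^r-g(\eta_n)X_n^r)\mathbf 1(E_n)]=x^r\sum_{j\in S}(g(j)-g(i))q_{ij}(x)+o(x^r).\]
   Context: $\mathbb{E}_{x,i}[\cdot]=\mathbb{E}[\cdot\mid X_n=x,\eta_n=i]$ and $q_{ij}(x)=\Pr[\eta_{n+1}=j\mid X_n=x,\eta_n=i]$. *)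

theory Defs
  imports "HOL-Probability.Probability" "HOL-Library.Landau_Symbols"
begin

text \<open>A time-homogeneous Markov chain (X_n, eta_n) on Sigma is described by its
  one-step transition kernel K : state \<Rightarrow> distribution of the next state.
  E_{x,i}[F(X_n,eta_n,X_{n+1},eta_{n+1})] = integral of F((x,i), .) w.r.t. K (x,i).\<close>

definition cond_exp :: "(real \<times> 's \<Rightarrow> (real \<times> 's) pmf) \<Rightarrow> real \<times> 's \<Rightarrow> (real \<times> 's \<Rightarrow> real) \<Rightarrow> real" where
  "cond_exp K s F = measure_pmf.expectation (K s) F"

definition q :: "(real \<times> 's \<Rightarrow> (real \<times> 's) pmf) \<Rightarrow> 's \<Rightarrow> 's \<Rightarrow> real \<Rightarrow> real" where
  "q K i j x = measure_pmf.prob (K (x, i)) {s. snd s = j}"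

definition locally_finite_state_space :: "(real \<times> 's) set \<Rightarrow> bool" where
  "locally_finite_state_space \<Sigma> \<longleftrightarrow> \<Sigma> \<subseteq> {s. 0 \<le> fst s} \<and> (\<forall>b. finite {s\<in>\<Sigma>. fst s \<le> b})"

end

theory Submission
  imports Defs
begin
lemma int_bdd: fixes f :: "'a \<Rightarrow> real" assumes "\<And>s. \<bar>f s\<bar> \<le> B" shows "integrable (measure_pmf M) f"
  by (rule measure_pmf.integrable_const_bound[where B=B]) (auto simp: assms)

lemma close1: fixes t e r :: real assumes "1 - e \<le> t" "t \<le> 1 + e" "e < 1" "0 \<le> e"
  shows "\<bar>t powr r - 1\<bar> \<le> \<bar>(1+e) powr r - 1\<bar> + \<bar>(1-e) powr r - 1\<bar>"
proof (cases "r \<ge> 0")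
  case True
  have "(1-e) powr r \<le> t powr r" "t powr r \<le> (1+e) powr r"
    using assms True by (auto intro!: powr_mono2)
  then show ?thesis by linarith
next
  case False
  have "(1-e) powr r \<ge> t powr r" "t powr r \<ge> (1+e) powr r"
    using assms False by (auto intro!: powr_mono2')
  then show ?thesis by linarith
qed

lemma close2: fixes x y r z :: real assumes "1 < x" "z < 1" "\<bar>y - x\<bar> \<le> x powr z"
  shows "\<bar>y powr r - x powr r\<bar> \<le> x powr r * (\<bar>(1 + x powr (z-1)) powr r - 1\<bar> + \<bar>(1 - x powr (z-1)) powr r - 1\<bar>)"
proof -
  define e where "e = x powr (z-1)"
  have e1: "e < 1"
  proof -
    have "x powr (z-1) < x powr 0" using assms by (subst powr_less_cancel_iff) auto
    thus ?thesis using assms by (simp add: e_def)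
  qed
  have e0: "0 \<le> e" unfolding e_def by simp
  have xz: "x powr z = x * e" unfolding e_def using assms
    using powr_mult_base[of x "z-1"] by simp
  define t where "t = y / x"
  have yt: "y = x * t" using assms unfolding t_def by auto
  have "x * \<bar>t - 1\<bar> \<le> x * e" using assms(3) assms(1) unfolding xz yt
  proof -
    have "x * t - x = x * (t - 1)" by (simp add: algebra_simps)
    thus ?thesis using assms(3) assms(1) unfolding xz yt by (simp add: abs_mult)
  qed
  hence "\<bar>t - 1\<bar> \<le> e" using assms(1) by simp
  hence t1: "1 - e \<le> t" "t \<le> 1 + e" by auto
  have tpos: "t \<ge> 0" using t1 e1 by linarith
  have "y powr r = x powr r * t powr r" unfolding yt using tpos assms(1) by (simp add: powr_mult)
  hence "y powr r - x powr r = x powr r * (t powr r - 1)" by (simp add: algebra_simps)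
  hence "\<bar>y powr r - x powr r\<bar> = x powr r * \<bar>t powr r - 1\<bar>"
    by (simp add: abs_mult)
  also have "\<dots> \<le> x powr r * (\<bar>(1+e) powr r - 1\<bar> + \<bar>(1-e) powr r - 1\<bar>)"
    by (rule mult_left_mono[OF close1[OF t1 e1 e0]]) simp
  finally show ?thesis unfolding e_def .
qed

lemma markov: fixes M :: "(real \<times> 's) pmf" and a p x Cp :: real
  assumes mom: "(\<integral>\<^sup>+ s. ennreal (\<bar>fst s - x\<bar> powr p) \<partial>measure_pmf M) \<le> ennreal Cp" and a: "a > 0" and p: "p > 0"
  shows "a powr p * measure_pmf.prob M {s. a < \<bar>fst s - x\<bar>} \<le> max Cp 0"
proof -
  define S :: "(real \<times> 's) set" where "S = {s. a < \<bar>fst s - x\<bar>}"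
  have pw: "ennreal (a powr p) * indicator S s \<le> ennreal (\<bar>fst s - x\<bar> powr p)" for s
  proof (cases "s \<in> S")
    case True
    hence "a powr p \<le> \<bar>fst s - x\<bar> powr p" using a p unfolding S_def by (auto intro!: powr_mono2)
    thus ?thesis using True by simp
  qed simp
  have "ennreal (a powr p) * emeasure (measure_pmf M) S = (\<integral>\<^sup>+ s. ennreal (a powr p) * indicator S s \<partial>measure_pmf M)"
    by (subst nn_integral_cmult_indicator) auto
  also have "\<dots> \<le> (\<integral>\<^sup>+ s. ennreal (\<bar>fst s - x\<bar> powr p) \<partial>measure_pmf M)"
    by (rule nn_integral_mono) (rule pw)
  also have "\<dots> \<le> ennreal (max Cp 0)" using mom
    by (metis ennreal_max_0 max.commute)
  finally have "ennreal (a powr p * measure_pmf.prob M S) \<le> ennreal (max Cp 0)"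
    by (simp add: measure_pmf.emeasure_eq_measure ennreal_mult)
  thus ?thesis unfolding S_def by (subst (asm) ennreal_le_iff) auto
qed

lemma exp_H: fixes M :: "('x \<times> 's::finite) pmf" and f :: "'s \<Rightarrow> real"
  shows "measure_pmf.expectation M (\<lambda>s. f (snd s)) = (\<Sum>j\<in>UNIV. f j * measure_pmf.prob M {s. snd s = j})"
proof -
  have "measure_pmf.expectation M (\<lambda>s. f (snd s)) = measure_pmf.expectation (map_pmf snd M) f"
    by simp
  also have "\<dots> = (\<Sum>j\<in>UNIV. f j * pmf (map_pmf snd M) j)"
    by (rule integral_measure_pmf_real) auto
  also have "\<dots> = (\<Sum>j\<in>UNIV. f j * measure_pmf.prob M {s. snd s = j})"
    by (simp add: pmf_map vimage_def)
  finally show ?thesis .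
qed

theorem lemma3p5:
  fixes K :: "real \<times> 's::finite \<Rightarrow> (real \<times> 's) pmf"
    and \<Sigma> :: "(real \<times> 's) set"
    and p Cp r \<zeta> :: real
    and g :: "'s \<Rightarrow> real"
    and i :: 's
  assumes lf: "locally_finite_state_space \<Sigma>"
    and closed: "\<And>s. s \<in> \<Sigma> \<Longrightarrow> set_pmf (K s) \<subseteq> \<Sigma>"
    and p_pos: "p > 0"
    and moment: "\<And>x j. (x, j) \<in> \<Sigma> \<Longrightarrow>
        (\<integral>\<^sup>+ s. ennreal (\<bar>fst s - x\<bar> powr p) \<partial>measure_pmf (K (x, j))) \<le> ennreal Cp"
    and zeta: "0 < \<zeta>" "\<zeta> < 1"
  shows "(\<lambda>x. cond_exp K (x, i)
              (\<lambda>s. (g (snd s) * fst s powr r - g i * x powr r)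
                   * indicator {s. \<bar>fst s - x\<bar> \<le> x powr \<zeta>} s)
           - x powr r * (\<Sum>j\<in>UNIV. (g j - g i) * q K i j x))
         \<in> o[at_top \<sqinter> principal {x. (x, i) \<in> \<Sigma>}](\<lambda>x. x powr r)"
proof -
  define G where "G = (\<Sum>j\<in>UNIV. \<bar>g j\<bar>)"
  have G: "\<bar>g j\<bar> \<le> G" for j unfolding G_def by (rule member_le_sum) auto
  have G0: "0 \<le> G" using G[of i] by linarith
  define \<delta> where "\<delta> x = \<bar>(1 + x powr (\<zeta>-1)) powr r - 1\<bar> + \<bar>(1 - x powr (\<zeta>-1)) powr r - 1\<bar>" for x :: real
  define C' where "C' = max Cp 0"
  have C'0: "0 \<le> C'" unfolding C'_def by simp
  define B where "B x = G * \<delta> x + 2 * G * C' * x powr (-(\<zeta>*p))" for x :: real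
  define D where "D = (\<lambda>x. cond_exp K (x, i)
              (\<lambda>s. (g (snd s) * fst s powr r - g i * x powr r)
                   * indicator {s. \<bar>fst s - x\<bar> \<le> x powr \<zeta>} s)
           - x powr r * (\<Sum>j\<in>UNIV. (g j - g i) * q K i j x))"
  have key: "\<bar>D x\<bar> \<le> x powr r * B x" if x1: "1 < x" and xA: "(x,i) \<in> \<Sigma>" for x
  proof -
    let ?M = "K (x,i)"
    define F where "F s = (g (snd s) * fst s powr r - g i * x powr r) * indicator {s. \<bar>fst s - x\<bar> \<le> x powr \<zeta>} s" for s :: "real \<times> 's"
    define H where "H s = x powr r * (g (snd s) - g i)" for s :: "real \<times> 's"
    define Ec where "Ec = {s::real\<times>'s. x powr \<zeta> < \<bar>fst s - x\<bar>}"
    have d0: "0 \<le> \<delta> x" unfolding \<delta>_def by simp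
    have xr: "0 < x powr r" using x1 by simp
    have pt: "\<bar>F s - H s\<bar> \<le> G * x powr r * \<delta> x + 2 * G * x powr r * indicator Ec s" for s
    proof (cases "\<bar>fst s - x\<bar> \<le> x powr \<zeta>")
      case True
      have "F s - H s = g (snd s) * (fst s powr r - x powr r)" unfolding F_def H_def using True
        by (simp add: algebra_simps)
      hence "\<bar>F s - H s\<bar> = \<bar>g (snd s)\<bar> * \<bar>fst s powr r - x powr r\<bar>" by (simp add: abs_mult)
      also have "\<dots> \<le> G * (x powr r * \<delta> x)"
        using close2[OF x1 zeta(2) True, of r] G[of "snd s"] G0
        by (intro mult_mono) (auto simp: \<delta>_def)
      finally show ?thesis using True by (simp add: Ec_def)
    next
      case False
      have "F s - H s = - (x powr r * (g (snd s) - g i))" by (simp add: F_def H_def False)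
      hence "\<bar>F s - H s\<bar> = x powr r * \<bar>g (snd s) - g i\<bar>" by (simp add: abs_mult)
      also have "\<dots> \<le> x powr r * (2*G)" using G[of "snd s"] G[of i] xr
        by (intro mult_left_mono) auto
      moreover have "0 \<le> G * x powr r * \<delta> x" using G0 xr d0 by simp
      ultimately show ?thesis using False by (simp add: Ec_def algebra_simps)
    qed
    have pt2: "\<bar>F s - H s\<bar> \<le> G * x powr r * \<delta> x + 2 * G * x powr r" for s
    proof -
      have "2 * G * x powr r * indicator Ec s \<le> 2 * G * x powr r"
        using G0 xr by (simp add: indicator_def)
      thus ?thesis using pt[of s] by linarith
    qed
    have intH: "integrable ?M H"
    proof (rule int_bdd[where B="x powr r * (2*G)"])
      fix s
      have "\<bar>H s\<bar> = x powr r * \<bar>g (snd s) - g i\<bar>" by (simp add: H_def abs_mult)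
      also have "\<dots> \<le> x powr r * (2*G)" using G[of "snd s"] G[of i] xr
        by (intro mult_left_mono) auto
      finally show "\<bar>H s\<bar> \<le> x powr r * (2*G)" .
    qed
    have intD: "integrable ?M (\<lambda>s. F s - H s)" by (rule int_bdd[OF pt2])
    have "integrable ?M (\<lambda>s. (F s - H s) + H s)" by (rule Bochner_Integration.integrable_add[OF intD intH])
    hence intF: "integrable ?M F" by simp
    have intB: "integrable ?M (\<lambda>s. G * x powr r * \<delta> x + 2 * G * x powr r * indicator Ec s)"
      by (rule int_bdd[where B="G * x powr r * \<delta> x + 2 * G * x powr r"])
         (use G0 d0 xr in \<open>auto simp: indicator_def\<close>)
    have EH: "cond_exp K (x,i) H = x powr r * (\<Sum>j\<in>UNIV. (g j - g i) * q K i j x)"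
      unfolding cond_exp_def H_def q_def using exp_H[of "K (x,i)" "\<lambda>j. g j - g i"] by simp
    have "D x = measure_pmf.expectation ?M F - measure_pmf.expectation ?M H"
      unfolding D_def EH[symmetric] unfolding cond_exp_def F_def by simp
    also have "\<dots> = measure_pmf.expectation ?M (\<lambda>s. F s - H s)"
      by (rule Bochner_Integration.integral_diff[OF intF intH, symmetric])
    finally have Dx: "D x = measure_pmf.expectation ?M (\<lambda>s. F s - H s)" .
    have "\<bar>D x\<bar> \<le> measure_pmf.expectation ?M (\<lambda>s. \<bar>F s - H s\<bar>)"
      unfolding Dx using integral_norm_bound[of ?M "\<lambda>s. F s - H s"] by simp
    also have "\<dots> \<le> measure_pmf.expectation ?M (\<lambda>s. G * x powr r * \<delta> x + 2 * G * x powr r * indicator Ec s)"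
      by (rule integral_mono[OF _ intB pt]) (rule integrable_abs[OF intD])
    also have "\<dots> = G * x powr r * \<delta> x + 2 * G * x powr r * measure_pmf.prob ?M Ec"
    proof -
      have i2: "integrable ?M (\<lambda>s. 2 * G * x powr r * indicator Ec s)"
        by (rule int_bdd[where B="\<bar>2 * G * x powr r\<bar>"]) (auto simp: indicator_def)
      show ?thesis
        by (subst Bochner_Integration.integral_add[OF _ i2]) auto
    qed
    also have "\<dots> \<le> G * x powr r * \<delta> x + 2 * G * x powr r * (C' * x powr (-(\<zeta>*p)))"
    proof -
      have xz: "0 < x powr \<zeta>" using x1 by simp
      have "(x powr \<zeta>) powr p * measure_pmf.prob ?M Ec \<le> C'"
        unfolding Ec_def C'_def by (rule markov[OF moment[OF xA] xz p_pos])
      hence "x powr (\<zeta>*p) * measure_pmf.prob ?M Ec \<le> C'" by (simp add: powr_powr)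
      hence "measure_pmf.prob ?M Ec \<le> C' / x powr (\<zeta>*p)" using x1 by (simp add: field_simps)
      hence "measure_pmf.prob ?M Ec \<le> C' * x powr (-(\<zeta>*p))" by (simp add: powr_minus_divide)
      thus ?thesis using G0 xr by (intro add_left_mono mult_left_mono) auto
    qed
    also have "\<dots> = x powr r * B x" unfolding B_def by (simp add: algebra_simps)
    finally show ?thesis .
  qed
  have e: "((\<lambda>x. x powr (\<zeta>-1)) \<longlongrightarrow> 0) at_top"
    by (rule tendsto_neg_powr[OF _ filterlim_ident]) (use zeta in simp)
  have e1: "((\<lambda>x. (1 + x powr (\<zeta>-1)) powr r) \<longlongrightarrow> 1) at_top"
    using tendsto_powr[OF tendsto_add[OF tendsto_const e, of 1] tendsto_const[of r]] by simp
  have e2: "((\<lambda>x. (1 - x powr (\<zeta>-1)) powr r) \<longlongrightarrow> 1) at_top"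
    using tendsto_powr[OF tendsto_diff[OF tendsto_const e, of 1] tendsto_const[of r]] by simp
  have w: "((\<lambda>x. x powr (-(\<zeta>*p))) \<longlongrightarrow> 0) at_top"
    by (rule tendsto_neg_powr[OF _ filterlim_ident]) (use zeta p_pos in simp)
  have "(\<delta> \<longlongrightarrow> \<bar>1 - 1\<bar> + \<bar>1 - 1\<bar>) at_top" unfolding \<delta>_def
    by (intro tendsto_intros e1 e2)
  hence d: "(\<delta> \<longlongrightarrow> 0) at_top" by simp
  have "(B \<longlongrightarrow> G * 0 + 2 * G * C' * 0) at_top" unfolding B_def
    by (intro tendsto_intros d w)
  hence limB: "(B \<longlongrightarrow> 0) at_top" by simp
  let ?F = "at_top \<sqinter> principal {x. (x, i) \<in> \<Sigma>}"
  have "D \<in> o[?F](\<lambda>x. x powr r)"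
  proof (rule smalloI_tendsto)
    show "((\<lambda>x. D x / x powr r) \<longlongrightarrow> 0) ?F"
    proof (rule Lim_null_comparison[where g=B])
      show "\<forall>\<^sub>F x in ?F. norm (D x / x powr r) \<le> B x"
        unfolding eventually_inf_principal
      proof (rule eventually_mono[OF eventually_gt_at_top[of 1]], intro impI)
        fix x :: real assume x1: "1 < x" and xA: "x \<in> {x. (x, i) \<in> \<Sigma>}"
        have xr: "0 < x powr r" using x1 by simp
        have "\<bar>D x\<bar> \<le> x powr r * B x" using key x1 xA by simp
        thus "norm (D x / x powr r) \<le> B x" using xr by (simp add: abs_div divide_le_eq mult.commute)
      qed
      show "(B \<longlongrightarrow> 0) ?F" by (rule tendsto_mono[OF inf_le1 limB])
    qed
    show "\<forall>\<^sub>F x in ?F. x powr r \<noteq> 0"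
      unfolding eventually_inf_principal
      by (rule eventually_mono[OF eventually_gt_at_top[of 1]]) simp
  qed
  thus ?thesis unfolding D_def .
qed

end
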